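(* For all $\lambda,\mu\in\Lambda(n,r)$ and every nonzero $a\in 1_\lambda\hat S(n,r)1_\mu$, one has $a\,\rho(a)\neq0$ (an element of $1_\lambda\hat S(n,r)1_\lambda$) and $\rho(a)\,a\neq 0$ (an element of $1_\mu\hat S(n,r)1_\mu$).
   Context: Fix integers $n\ge3$, $r\ge1$; indices are read modulo $n$. $\hat U=\hat{\mathbf U}_q(\hat{\mathfrak{gl}}_n)$ is the associative unital $\mathbb{Q}(q)$-algebra generated by $R^{\pm1}$, $K_i^{\pm1}$, $E_i$, $E_{-i}$ ($1\le i\le n$) subject to: the $K_i^{\pm1}$ pairwise commute and $K_iK_i^{-1}=K_i^{-1}K_i=1$; $E_iE_{-j}-E_{-j}E_i=\delta_{ij}\frac{K_iK_{i+1}^{-1}-K_i^{-1}K_{i+1}}{q-q^{-1}}$; $K_iE_{\pm j}=q^{\pm(\delta_{i,j}-\delta_{i,j+1})}E_{\pm j}K_i$; for $\epsilon,\delta\in\{1,-1\}$, $E_{\epsilon i}^2E_{\epsilon(i+\delta)}-(q+q^{-1})E_{\epsilon i}E_{\epsilon(i+\delta)}E_{\epsilon i}+E_{\epsilon(i+\delta)}E_{\epsilon i}^2=0$; $E_{\epsilon i}E_{\epsilon j}=E_{\epsilon j}E_{\epsilon i}$ if $j\not\equiv i\pm1\pmod n$; $RR^{-1}=R^{-1}R=1$; $RXR^{-1}=X'$ for $(X,X')\in\{(E_i,E_{i+1}),(E_{-i},E_{-(i+1)}),(K_i^{-1},K_{i+1}^{-1})\}$. The coproduct $\Delta$ is the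 algebra map with $\Delta(E_i)=E_i\otimes K_iK_{i+1}^{-1}+1\otimes E_i$, $\Delta(E_{-i})=K_i^{-1}K_{i+1}\otimes E_{-i}+E_{-i}\otimes1$, $\Delta(K_i^{\pm1})=K_i^{\pm1}\otimes K_i^{\pm1}$, $\Delta(R^{\pm1})=R^{\pm1}\otimes R^{\pm1}$. $\rho$ is the $\mathbb{Q}(q)$-linear algebra anti-involution of $\hat U$ with $\rho(E_i)=qK_iK_{i+1}^{-1}E_{-i}$, $\rho(E_{-i})=qK_i^{-1}K_{i+1}E_i$, $\rho(K_i)=K_i$, $\rho(R)=R^{-1}$. $V$ is the $\mathbb{Q}(q)$-vector space with basis $\{e_t\}_{t\in\mathbb{Z}}$, a $\hat U$-module via: $E_ie_{t+1}=e_t$ if $i\equiv t\pmod n$ and $0$ otherwise; $E_{-i}e_t=e_{t+1}$ if $i\equiv t\pmod n$ and $0$ otherwise; $K_i^{\pm1}e_t=q^{\pm1}e_t$ if $i\equiv t\pmod n$ and $e_t$ otherwise; $R^{\pm1}e_t=e_{t\pm1}$; $\hat U$ acts on $V^{\otimes r}$ via the iterated coproduct, giving $\psi_{n,r}\colon\hat U\to\mathrm{End}_{\mathbb{Q}(q)}(V^{\otimes r})$. The affine $q$-Schur algebra is $\hat S(n,r):=\psi_{n,r}(\hat U)$ (by affine Schur–Weyl duality this is the centralizer of the extended affine Hecke algebra action on $V^{\otimes r}$). The bilinear form on $V^{\otimes r}$ is $\langle e_{s_1}\otimes\cdots\otimes e_{s_r},e_{t_1}\otimes\cdots\otimes e_{t_r}\rangle=\prod_j\delta_{s_jt_j}$;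 one has $\langle Xv,w\rangle=\langle v,\rho(X)w\rangle$, so $\rho$ induces a well-defined anti-involution of $\hat S(n,r)$, again denoted $\rho$, by $\rho(\psi_{n,r}(X))=\psi_{n,r}(\rho(X))$. $\Lambda(n,r)=\{\lambda\in\mathbb{N}^n:\sum_i\lambda_i=r\}$; for $\lambda\in\Lambda(n,r)$, $1_\lambda\in\hat S(n,r)$ is the projection of $V^{\otimes r}$ onto the span of those $e_{t_1}\otimes\cdots\otimes e_{t_r}$ with $\#\{j: t_j\equiv i\pmod n\}=\lambda_i$ for all $i$ (so $\rho(1_\lambda)=1_\lambda$ and $\sum_{\lambda}1_\lambda=1$). *)

theory Defs
  imports "HOL-Computational_Algebra.Fraction_Field" "HOL-Computational_Algebra.Polynomial"
begin

text \<open>The ground field Q(q) = rational functions over the rationals, q the indeterminate.\<close>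
type_synonym fq = "rat poly fract"

definition qq :: fq where "qq = Fraction_Field.Fract [:0, 1:] 1"

text \<open>Generators of the quantum affine algebra: R, R^-1, K_i, K_i^-1, E_i, and F i = E_{-i}.
  Indices are integers read modulo n.\<close>
datatype gen = R | Rinv | K int | Kinv int | E int | F int

text \<open>Vectors of V^{\<otimes> r}: coefficient functions on the basis e_{t_1} \<otimes> ... \<otimes> e_{t_r},
  indexed by integer lists t.\<close>
definition bas :: "int list \<Rightarrow> int list \<Rightarrow> fq" where
  "bas t = (\<lambda>u. if u = t then 1 else 0)"

definition tens1 :: "int \<Rightarrow> (int list \<Rightarrow> fq) \<Rightarrow> int list \<Rightarrow> fq" where
  "tens1 s v = (\<lambda>u. case u of [] \<Rightarrow> 0 | a # u' \<Rightarrow> if a = s then v u' else 0)"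

definition ccount :: "nat \<Rightarrow> int \<Rightarrow> int list \<Rightarrow> nat" where
  "ccount n i t = length (filter (\<lambda>j. j mod int n = i mod int n) t)"

text \<open>K_i K_{i+1}^{-1} acts on e_t by qq powi (kt n i t)\<close>
definition kt :: "nat \<Rightarrow> int \<Rightarrow> int list \<Rightarrow> int" where
  "kt n i t = int (ccount n i t) - int (ccount n (i + 1) t)"

text \<open>Action of a generator on a basis tensor e_t via the iterated coproduct
  (Delta^(k+1) = (1 \<otimes> Delta^(k)) \<circ> Delta; on V^{\<otimes>0} the counit acts).\<close>
fun gact :: "nat \<Rightarrow> gen \<Rightarrow> int list \<Rightarrow> int list \<Rightarrow> fq" where
  "gact n R t = bas (map (\<lambda>x. x + 1) t)"
| "gact n Rinv t = bas (map (\<lambda>x. x - 1) t)"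
| "gact n (K i) t = (\<lambda>u. qq powi int (ccount n i t) * bas t u)"
| "gact n (Kinv i) t = (\<lambda>u. qq powi (- int (ccount n i t)) * bas t u)"
| "gact n (E i) [] = (\<lambda>_. 0)"
| "gact n (E i) (s # w) = (\<lambda>u.
      (if (s - 1) mod int n = i mod int n
       then tens1 (s - 1) (\<lambda>u'. qq powi (kt n i w) * bas w u') u else 0)
      + tens1 s (gact n (E i) w) u)"
| "gact n (F i) [] = (\<lambda>_. 0)"
| "gact n (F i) (s # w) = (\<lambda>u.
      qq powi (- kt n i [s]) * tens1 s (gact n (F i) w) u
      + (if s mod int n = i mod int n then tens1 (s + 1) (bas w) u else 0))"

text \<open>Free algebra expressions over the generators (elements of the free algebra,
  which surjects onto U-hat).\<close>
datatype uexp = Gen gen | One | Add uexp uexp | Smul fq uexp | Mul uexp uexp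

text \<open>Operators on V^{\<otimes> r}, given by the images of basis vectors: A t = A(e_t).\<close>
type_synonym op = "int list \<Rightarrow> int list \<Rightarrow> fq"

definition zero_op :: op where "zero_op = (\<lambda>t u. 0)"

text \<open>opcomp A B = A \<circ> B (apply B first)\<close>
definition opcomp :: "op \<Rightarrow> op \<Rightarrow> op" where
  "opcomp A B = (\<lambda>t u. \<Sum>s\<in>{s. B t s \<noteq> 0}. B t s * A s u)"

fun psi :: "nat \<Rightarrow> nat \<Rightarrow> uexp \<Rightarrow> op" where
  "psi n r (Gen g) = (\<lambda>t. if length t = r then gact n g t else (\<lambda>_. 0))"
| "psi n r One = (\<lambda>t. if length t = r then bas t else (\<lambda>_. 0))"
| "psi n r (Add x y) = (\<lambda>t u. psi n r x t u + psi n r y t u)"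
| "psi n r (Smul c x) = (\<lambda>t u. c * psi n r x t u)"
| "psi n r (Mul x y) = opcomp (psi n r x) (psi n r y)"

fun rho :: "uexp \<Rightarrow> uexp" where
  "rho (Gen (E i)) = Smul qq (Mul (Mul (Gen (K i)) (Gen (Kinv (i + 1)))) (Gen (F i)))"
| "rho (Gen (F i)) = Smul qq (Mul (Mul (Gen (Kinv i)) (Gen (K (i + 1)))) (Gen (E i)))"
| "rho (Gen (K i)) = Gen (K i)"
| "rho (Gen (Kinv i)) = Gen (Kinv i)"
| "rho (Gen R) = Gen Rinv"
| "rho (Gen Rinv) = Gen R"
| "rho One = One"
| "rho (Add x y) = Add (rho x) (rho y)"
| "rho (Smul c x) = Smul c (rho x)"
| "rho (Mul x y) = Mul (rho y) (rho x)"

text \<open>Lambda(n,r), compositions written as lists (lam ! (i-1) = lambda_i).\<close>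
definition Lambda :: "nat \<Rightarrow> nat \<Rightarrow> nat list set" where
  "Lambda n r = {lam. length lam = n \<and> sum_list lam = r}"

definition proj :: "nat \<Rightarrow> nat \<Rightarrow> nat list \<Rightarrow> op" where
  "proj n r lam = (\<lambda>t. if length t = r \<and> (\<forall>i\<in>{1..n}. ccount n (int i) t = lam ! (i - 1))
                      then bas t else (\<lambda>_. 0))"

definition Shat :: "nat \<Rightarrow> nat \<Rightarrow> op set" where
  "Shat n r = range (psi n r)"

end

theory Submission imports Defs begin
lemma tens1_Nil[simp]: "tens1 s v [] = 0" by (simp add: tens1_def)
lemma tens1_Cons[simp]: "tens1 s v (a # u) = (if a = s then v u else 0)" by (simp add: tens1_def)
lemma gactE_Nil: "gact n (E i) (s # w) [] = 0" by (simp add: tens1_def)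
lemma gactF_Nil: "gact n (F i) (s # w) [] = 0" by (simp add: tens1_def)
lemma gactE_CC: "gact n (E i) (s # w) (b # u) =
   (if (s - 1) mod int n = i mod int n \<and> b = s - 1 \<and> u = w then qq powi (kt n i w) else 0)
   + (if b = s then gact n (E i) w u else 0)"
  by (simp add: bas_def)
lemma gactF_CC: "gact n (F i) (s # w) (b # u) =
   (if b = s then qq powi (- kt n i [s]) * gact n (F i) w u else 0)
   + (if s mod int n = i mod int n \<and> b = s + 1 \<and> u = w then 1 else 0)"
  by (simp add: bas_def)
declare gact.simps(6,8)[simp del]
declare gactE_Nil[simp] gactF_Nil[simp] gactE_CC[simp] gactF_CC[simp]

lemma gactE_len: "gact n (E i) t u \<noteq> 0 \<Longrightarrow> length u = length t"
proof (induction t arbitrary: u)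
  case Nil then show ?case by simp
next
  case (Cons s w)
  show ?case
  proof (cases u)
    case Nil then show ?thesis using Cons.prems by simp
  next
    case (Cons b u')
    then show ?thesis using Cons.prems Cons.IH[of u'] by (auto split: if_splits)
  qed
qed

lemma gactF_len: "gact n (F i) t u \<noteq> 0 \<Longrightarrow> length u = length t"
proof (induction t arbitrary: u)
  case Nil then show ?case by simp
next
  case (Cons s w)
  show ?case
  proof (cases u)
    case Nil then show ?thesis using Cons.prems by simp
  next
    case (Cons b u')
    then show ?thesis using Cons.prems Cons.IH[of u'] by (auto split: if_splits)
  qed
qed

lemma gact_len: assumes "gact n g t u \<noteq> 0" shows "length u = length t"
proof (cases g)
  case (E i) then show ?thesis using assms gactE_len by simp
next
  case (F i) then show ?thesis using assms gactF_len by simp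
qed (use assms in \<open>auto simp: bas_def split: if_splits\<close>)

lemma gactE_fin: "finite {u. gact n (E i) t u \<noteq> 0}"
proof (induction t)
  case Nil then show ?case by simp
next
  case (Cons s w)
  have "{u. gact n (E i) (s # w) u \<noteq> 0} \<subseteq> insert ((s - 1) # w) (Cons s ` {u. gact n (E i) w u \<noteq> 0})"
  proof
    fix u assume u: "u \<in> {u. gact n (E i) (s # w) u \<noteq> 0}"
    show "u \<in> insert ((s - 1) # w) (Cons s ` {u. gact n (E i) w u \<noteq> 0})"
    proof (cases u)
      case Nil then show ?thesis using u by simp
    next
      case (Cons b u')
      show ?thesis
      proof (cases "b = s")
        case True then show ?thesis using u Cons by auto
      next
        case False then show ?thesis using u Cons by (auto split: if_splits)
      qed
    qed
  qed
  moreover have "finite (insert ((s - 1) # w) (Cons s ` {u. gact n (E i) w u \<noteq> 0}))"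
    using Cons by blast
  ultimately show ?case by (rule finite_subset)
qed

lemma gactF_fin: "finite {u. gact n (F i) t u \<noteq> 0}"
proof (induction t)
  case Nil then show ?case by simp
next
  case (Cons s w)
  have "{u. gact n (F i) (s # w) u \<noteq> 0} \<subseteq> insert ((s + 1) # w) (Cons s ` {u. gact n (F i) w u \<noteq> 0})"
  proof
    fix u assume u: "u \<in> {u. gact n (F i) (s # w) u \<noteq> 0}"
    show "u \<in> insert ((s + 1) # w) (Cons s ` {u. gact n (F i) w u \<noteq> 0})"
    proof (cases u)
      case Nil then show ?thesis using u by simp
    next
      case (Cons b u')
      show ?thesis
      proof (cases "b = s")
        case True then show ?thesis using u Cons by auto
      next
        case False then show ?thesis using u Cons by (auto split: if_splits)
      qed
    qed
  qed
  moreover have "finite (insert ((s + 1) # w) (Cons s ` {u. gact n (F i) w u \<noteq> 0}))"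
    using Cons by blast
  ultimately show ?case by (rule finite_subset)
qed

lemma gact_fin: "finite {u. gact n g t u \<noteq> 0}"
proof (cases g)
  case (E i) then show ?thesis using gactE_fin by simp
next
  case (F i) then show ?thesis using gactF_fin by simp
next
  case (K i)
  have "{u. gact n g t u \<noteq> 0} \<subseteq> {t}" using K by (auto simp: bas_def)
  then show ?thesis by (rule finite_subset) simp
next
  case (Kinv i)
  have "{u. gact n g t u \<noteq> 0} \<subseteq> {t}" using Kinv by (auto simp: bas_def)
  then show ?thesis by (rule finite_subset) simp
qed (simp_all add: bas_def)
lemma qq_nz: "qq \<noteq> 0"
  unfolding qq_def by (simp add: Zero_fract_def eq_fract)

lemma powi_mult: "qq powi a * qq powi b = qq powi (a + b)"
  by (simp add: power_int_add qq_nz)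

lemma kt_Cons: "kt n i (a # w) = kt n i [a] + kt n i w"
  by (simp add: kt_def ccount_def)

lemma modne:
  assumes "n \<ge> 2" "a mod int n = i mod int n" shows "a mod int n \<noteq> (i + 1) mod int n"
proof
  assume "a mod int n = (i + 1) mod int n"
  then have "(i + 1) mod int n = i mod int n" using assms by simp
  then have "int n dvd (i + 1) - i" by (simp add: mod_eq_dvd_iff)
  then have "int n dvd 1" by simp
  then show False using assms by simp
qed

lemma kt_i: "n \<ge> 2 \<Longrightarrow> a mod int n = i mod int n \<Longrightarrow> kt n i [a] = 1"
  using modne[of n a i] by (simp add: kt_def ccount_def)

lemma kt_i1: "n \<ge> 2 \<Longrightarrow> a mod int n = (i + 1) mod int n \<Longrightarrow> kt n i [a] = -1"
  using modne[of n a i] by (auto simp add: kt_def ccount_def)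

lemma EF_ident:
  assumes n: "n \<ge> 2"
  shows "gact n (E i) u t = qq powi (1 + kt n i u) * gact n (F i) t u"
proof (induction t arbitrary: u)
  case Nil then show ?case by (cases u) simp_all
next
  case (Cons a t')
  show ?case
  proof (cases u)
    case Nil then show ?thesis by simp
  next
    case (Cons b u')
    have IH: "gact n (E i) u' t' = qq powi (1 + kt n i u') * gact n (F i) t' u'" by (rule Cons.IH)
    consider "a = b" | "b = a + 1" | "a \<noteq> b" "b \<noteq> a + 1" by blast
    then show ?thesis
    proof cases
      case 1
      have e: "(1 + kt n i (b # u')) + (- kt n i [a]) = 1 + kt n i u'" using 1 kt_Cons[of n i b u'] by simp
      have A: "gact n (E i) (b # u') (a # t') = gact n (E i) u' t'" using 1 by simp
      have B: "gact n (F i) (a # t') (b # u') = qq powi (- kt n i [a]) * gact n (F i) t' u'" using 1 by simp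
      show ?thesis unfolding Cons A B IH mult.assoc[symmetric] powi_mult e ..
    next
      case 2
      have c1: "b - 1 = a" "a \<noteq> b" using 2 by simp_all
      show ?thesis
      proof (cases "a mod int n = i mod int n \<and> t' = u'")
        case True
        have "(a + 1) mod int n = (i + 1) mod int n"
          by (rule mod_add_cong) (use True in simp_all)
        then have b: "b mod int n = (i + 1) mod int n" using 2 by simp
        have e: "1 + kt n i (b # u') = kt n i u'" using kt_i1[OF n b] kt_Cons[of n i b u'] by simp
        have A: "gact n (E i) (b # u') (a # t') = qq powi (kt n i u')" using c1 True by simp
        have B: "gact n (F i) (a # t') (b # u') = 1" using c1 True 2 by simp
        show ?thesis unfolding Cons A B e by simp
      next
        case False
        have A: "gact n (E i) (b # u') (a # t') = 0" using c1 False by auto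
        have B: "gact n (F i) (a # t') (b # u') = 0" using c1 False 2 by auto
        show ?thesis unfolding Cons A B by simp
      qed
    next
      case 3
      have c1: "b - 1 \<noteq> a" using 3 by auto
      have A: "gact n (E i) (b # u') (a # t') = 0" using c1 3 by simp
      have B: "gact n (F i) (a # t') (b # u') = 0" using 3 by simp
      show ?thesis unfolding Cons A B by simp
    qed
  qed
qed
lemma FE_ident:
  assumes n: "n \<ge> 2"
  shows "gact n (F i) u t = qq powi (1 - kt n i u) * gact n (E i) t u"
proof (induction t arbitrary: u)
  case Nil then show ?case by (cases u) simp_all
next
  case (Cons a t')
  show ?case
  proof (cases u)
    case Nil then show ?thesis by simp
  next
    case (Cons b u')
    have IH: "gact n (F i) u' t' = qq powi (1 - kt n i u') * gact n (E i) t' u'" by (rule Cons.IH)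
    consider "a = b" | "a = b + 1" | "a \<noteq> b" "a \<noteq> b + 1" by blast
    then show ?thesis
    proof cases
      case 1
      have e: "- kt n i [b] + (1 - kt n i u') = 1 - kt n i (b # u')" using kt_Cons[of n i b u'] by simp
      have A: "gact n (F i) (b # u') (a # t') = qq powi (- kt n i [b]) * gact n (F i) u' t'" using 1 by simp
      have B: "gact n (E i) (a # t') (b # u') = gact n (E i) t' u'" using 1 by simp
      show ?thesis unfolding Cons A B IH mult.assoc[symmetric] powi_mult e ..
    next
      case 2
      have c1: "a - 1 = b" "a \<noteq> b" "b \<noteq> a" using 2 by simp_all
      show ?thesis
      proof (cases "b mod int n = i mod int n \<and> t' = u'")
        case True
        have e: "1 - kt n i (b # u') + kt n i t' = 0"
          using kt_i[OF n] True kt_Cons[of n i b u'] by simp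
        have A: "gact n (F i) (b # u') (a # t') = 1" using c1 True 2 by simp
        have B: "gact n (E i) (a # t') (b # u') = qq powi (kt n i t')" using c1 True by simp
        show ?thesis unfolding Cons A B powi_mult e by simp
      next
        case False
        have A: "gact n (F i) (b # u') (a # t') = 0" using c1 False 2 by auto
        have B: "gact n (E i) (a # t') (b # u') = 0" using c1 False by auto
        show ?thesis unfolding Cons A B by simp
      qed
    next
      case 3
      have c1: "a - 1 \<noteq> b" using 3 by auto
      have A: "gact n (F i) (b # u') (a # t') = 0" using 3 by auto
      have B: "gact n (E i) (a # t') (b # u') = 0" using c1 3 by simp
      show ?thesis unfolding Cons A B by simp
    qed
  qed
qed
definition rowfin :: "op \<Rightarrow> bool" where "rowfin A \<longleftrightarrow> (\<forall>t. finite {u. A t u \<noteq> 0})"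
definition tr :: "op \<Rightarrow> op" where "tr A = (\<lambda>t u. A u t)"

lemma opcomp_sum:
  assumes "finite S" "{s. B t s \<noteq> 0} \<subseteq> S"
  shows "opcomp A B t u = (\<Sum>s\<in>S. B t s * A s u)"
  unfolding opcomp_def
  by (rule sum.mono_neutral_left) (use assms in auto)

lemma rowfin_opcomp:
  assumes "rowfin A" "rowfin B" shows "rowfin (opcomp A B)"
  unfolding rowfin_def
proof
  fix t
  have "{u. opcomp A B t u \<noteq> 0} \<subseteq> (\<Union>s\<in>{s. B t s \<noteq> 0}. {u. A s u \<noteq> 0})"
  proof
    fix u assume "u \<in> {u. opcomp A B t u \<noteq> 0}"
    then have "(\<Sum>s\<in>{s. B t s \<noteq> 0}. B t s * A s u) \<noteq> 0" by (simp add: opcomp_def)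
    then obtain s where "s \<in> {s. B t s \<noteq> 0}" "B t s * A s u \<noteq> 0"
      by (rule sum.not_neutral_contains_not_neutral)
    then have "B t s \<noteq> 0" "A s u \<noteq> 0" by auto
    then show "u \<in> (\<Union>s\<in>{s. B t s \<noteq> 0}. {u. A s u \<noteq> 0})" by blast
  qed
  moreover have "finite (\<Union>s\<in>{s. B t s \<noteq> 0}. {u. A s u \<noteq> 0})"
    using assms unfolding rowfin_def by blast
  ultimately show "finite {u. opcomp A B t u \<noteq> 0}" by (rule finite_subset)
qed

lemma tr_opcomp:
  assumes "rowfin A" "rowfin (tr A)" "rowfin B" "rowfin (tr B)"
  shows "tr (opcomp A B) = opcomp (tr B) (tr A)"
proof (intro ext)
  fix t u
  let ?S = "{s. B u s \<noteq> 0} \<union> {s. A s t \<noteq> 0}"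
  have fS: "finite ?S" using assms unfolding rowfin_def tr_def by auto
  have "tr (opcomp A B) t u = (\<Sum>s\<in>?S. B u s * A s t)"
    unfolding tr_def by (rule opcomp_sum[OF fS]) auto
  moreover have "opcomp (tr B) (tr A) t u = (\<Sum>s\<in>?S. tr A t s * tr B s u)"
    by (rule opcomp_sum[OF fS]) (auto simp: tr_def)
  ultimately show "tr (opcomp A B) t u = opcomp (tr B) (tr A) t u"
    by (simp add: tr_def mult.commute)
qed

lemma opcomp_diag:
  assumes D: "\<And>s u. D s u = (if P s \<and> s = u then d s else 0)"
    and fin: "finite {s. B t s \<noteq> 0}"
  shows "opcomp D B t u = B t u * (if P u then d u else 0)"
proof -
  have "opcomp D B t u = (\<Sum>s\<in>{s. B t s \<noteq> 0}. if s = u then B t u * (if P u then d u else 0) else 0)"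
    unfolding opcomp_def D by (rule sum.cong) auto
  also have "\<dots> = B t u * (if P u then d u else 0)"
    using fin by (cases "B t u = 0") (auto simp: sum.delta')
  finally show ?thesis .
qed

lemma sq_pos: "(x::fq) \<noteq> 0 \<Longrightarrow> 0 < x * x"
  by (auto simp add: zero_less_mult_iff)

lemma psi_gen: "psi n r (Gen g) t u = (if length t = r then gact n g t u else 0)"
  by simp

lemma psi_rowfin: "rowfin (psi n r x)"
proof (induction x)
  case (Gen g)
  show ?case unfolding rowfin_def
  proof
    fix t
    have "{u. psi n r (Gen g) t u \<noteq> 0} \<subseteq> {u. gact n g t u \<noteq> 0}" by auto
    then show "finite {u. psi n r (Gen g) t u \<noteq> 0}" using gact_fin by (rule finite_subset)
  qed
next
  case One
  show ?case unfolding rowfin_def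
  proof
    fix t
    have "{u. psi n r One t u \<noteq> 0} \<subseteq> {t}" by (auto simp: bas_def)
    then show "finite {u. psi n r One t u \<noteq> 0}" by (rule finite_subset) simp
  qed
next
  case (Add x y)
  show ?case unfolding rowfin_def
  proof
    fix t
    have "{u. psi n r (Add x y) t u \<noteq> 0} \<subseteq> {u. psi n r x t u \<noteq> 0} \<union> {u. psi n r y t u \<noteq> 0}" by auto
    moreover have "finite ({u. psi n r x t u \<noteq> 0} \<union> {u. psi n r y t u \<noteq> 0})"
      using Add unfolding rowfin_def by blast
    ultimately show "finite {u. psi n r (Add x y) t u \<noteq> 0}" by (rule finite_subset)
  qed
next
  case (Smul c x)
  show ?case unfolding rowfin_def
  proof
    fix t
    have "{u. psi n r (Smul c x) t u \<noteq> 0} \<subseteq> {u. psi n r x t u \<noteq> 0}" by auto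
    then show "finite {u. psi n r (Smul c x) t u \<noteq> 0}" using Smul unfolding rowfin_def
      by (blast intro: finite_subset)
  qed
next
  case (Mul x y)
  then show ?case by (simp add: rowfin_opcomp)
qed

fun dd :: "nat \<Rightarrow> gen \<Rightarrow> int list \<Rightarrow> fq" where
  "dd n (K j) s = qq powi int (ccount n j s)"
| "dd n (Kinv j) s = qq powi (- int (ccount n j s))"
| "dd n _ s = 0"

lemma psi_diag:
  assumes "g = K j \<or> g = Kinv j"
  shows "psi n r (Gen g) s u = (if length s = r \<and> s = u then dd n g s else 0)"
  using assms by (auto simp: bas_def)

lemma opcomp_KK:
  assumes g1: "g1 = K j1 \<or> g1 = Kinv j1" and g2: "g2 = K j2 \<or> g2 = Kinv j2"
    and fin: "rowfin B"
  shows "opcomp (opcomp (psi n r (Gen g1)) (psi n r (Gen g2))) B t u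
       = B t u * (if length u = r then dd n g2 u * dd n g1 u else 0)"
proof -
  have C: "opcomp (psi n r (Gen g1)) (psi n r (Gen g2)) s v
      = (if length s = r \<and> s = v then dd n g2 s * dd n g1 s else 0)" for s v
  proof -
    have "opcomp (psi n r (Gen g1)) (psi n r (Gen g2)) s v
        = psi n r (Gen g2) s v * (if length v = r then dd n g1 v else 0)"
    proof -
      have rf: "finite {v. psi n r (Gen g2) s v \<noteq> 0}"
        using psi_rowfin[of n r "Gen g2"] unfolding rowfin_def by blast
      show ?thesis
        apply (rule opcomp_diag[where P="\<lambda>s. length s = r" and d="dd n g1"])
         apply (rule psi_diag[OF g1])
        apply (rule rf)
        done
    qed
    then show ?thesis using psi_diag[OF g2, of n r s v] by auto
  qed
  show ?thesis
    by (rule opcomp_diag[OF C]) (use fin in \<open>auto simp: rowfin_def\<close>)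
qed

lemma map_shift: "(u = map (\<lambda>x. x - 1) t) \<longleftrightarrow> (t = map (\<lambda>x. x + 1) (u::int list))"
proof (induction t arbitrary: u)
  case Nil then show ?case by auto
next
  case (Cons a t) then show ?case by (cases u) auto
qed

lemma map_shift': "(u = map (\<lambda>x. x + 1) t) \<longleftrightarrow> (t = map (\<lambda>x. x - 1) (u::int list))"
  using map_shift by metis

lemma rho_gen:
  assumes n: "n \<ge> 2"
  shows "psi n r (rho (Gen g)) = tr (psi n r (Gen g))"
proof (intro ext)
  fix t u
  show "psi n r (rho (Gen g)) t u = tr (psi n r (Gen g)) t u"
  proof (cases g)
    case R
    then show ?thesis by (auto simp: tr_def bas_def map_shift)
  next
    case Rinv
    then show ?thesis by (auto simp: tr_def bas_def map_shift')
  next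
    case (K j)
    then show ?thesis by (auto simp: tr_def bas_def)
  next
    case (Kinv j)
    then show ?thesis by (auto simp: tr_def bas_def)
  next
    case (E i)
    have L: "psi n r (rho (Gen g)) t u = qq * (psi n r (Gen (F i)) t u *
         (if length u = r then dd n (Kinv (i + 1)) u * dd n (K i) u else 0))"
    proof -
      have O: "opcomp (opcomp (psi n r (Gen (K i))) (psi n r (Gen (Kinv (i+1))))) (psi n r (Gen (F i))) t u
        = psi n r (Gen (F i)) t u * (if length u = r then dd n (Kinv (i+1)) u * dd n (K i) u else 0)"
        by (rule opcomp_KK[OF _ _ psi_rowfin]) simp_all
      show ?thesis unfolding E by (simp only: rho.simps psi.simps(4,5) O)
    qed
    have d: "dd n (Kinv (i + 1)) u * dd n (K i) u = qq powi (kt n i u)"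
      unfolding dd.simps powi_mult by (rule arg_cong[where f="\<lambda>k. qq powi k"]) (simp add: kt_def)
    show ?thesis
    proof (cases "length u = r")
      case True
      show ?thesis
      proof (cases "length t = r")
        case True
        then show ?thesis using \<open>length u = r\<close> L d E EF_ident[OF n, of i u t]
          by (simp add: tr_def powi_mult[symmetric] mult.assoc mult.commute mult.left_commute)
      next
        case False
        then have "gact n (E i) u t = 0" using gact_len[of n "E i" u t] \<open>length u = r\<close> by auto
        then show ?thesis using L E False by (simp add: tr_def)
      qed
    next
      case False
      then show ?thesis using L E by (simp add: tr_def)
    qed
  next
    case (F i)
    have L: "psi n r (rho (Gen g)) t u = qq * (psi n r (Gen (E i)) t u *
         (if length u = r then dd n (K (i + 1)) u * dd n (Kinv i) u else 0))"
    proof -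
      have O: "opcomp (opcomp (psi n r (Gen (Kinv i))) (psi n r (Gen (K (i+1))))) (psi n r (Gen (E i))) t u
        = psi n r (Gen (E i)) t u * (if length u = r then dd n (K (i+1)) u * dd n (Kinv i) u else 0)"
        by (rule opcomp_KK[OF _ _ psi_rowfin]) simp_all
      show ?thesis unfolding F by (simp only: rho.simps psi.simps(4,5) O)
    qed
    have d: "dd n (K (i + 1)) u * dd n (Kinv i) u = qq powi (- kt n i u)"
      unfolding dd.simps powi_mult by (rule arg_cong[where f="\<lambda>k. qq powi k"]) (simp add: kt_def)
    show ?thesis
    proof (cases "length u = r")
      case True
      show ?thesis
      proof (cases "length t = r")
        case True
        have lu: "length u = r" by fact
        have "psi n r (rho (Gen g)) t u = qq * (gact n (E i) t u * qq powi (- kt n i u))"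
          unfolding L d psi_gen using True lu by simp
        also have "\<dots> = gact n (E i) t u * (qq * qq powi (- kt n i u))"
          by (simp only: mult.left_commute)
        also have "qq * qq powi (- kt n i u) = qq powi (1 - kt n i u)"
          using powi_mult[of 1 "- kt n i u"] by simp
        also have "gact n (E i) t u * qq powi (1 - kt n i u) = gact n (F i) u t"
          using FE_ident[OF n, of i u t] by (simp only: mult.commute)
        also have "\<dots> = tr (psi n r (Gen g)) t u"
          unfolding tr_def F psi_gen using lu by simp
        finally show ?thesis .
      next
        case False
        then have "gact n (F i) u t = 0" using gact_len[of n "F i" u t] \<open>length u = r\<close> by auto
        then show ?thesis using L F False by (simp add: tr_def)
      qed
    next
      case False
      then show ?thesis using L F by (simp add: tr_def)
    qed
  qed
qed

lemma rho_tr: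
  assumes n: "n \<ge> 2"
  shows "psi n r (rho x) = tr (psi n r x)"
proof (induction x)
  case (Gen g) then show ?case by (rule rho_gen[OF n])
next
  case One then show ?case by (auto simp: tr_def bas_def fun_eq_iff)
next
  case (Add x y) then show ?case by (simp add: tr_def fun_eq_iff)
next
  case (Smul c x) then show ?case by (simp add: tr_def fun_eq_iff)
next
  case (Mul x y)
  have rx: "rowfin (tr (psi n r x))" using Mul(1) psi_rowfin[of n r "rho x"] by simp
  have ry: "rowfin (tr (psi n r y))" using Mul(2) psi_rowfin[of n r "rho y"] by simp
  have "psi n r (rho (Mul x y)) = opcomp (psi n r (rho y)) (psi n r (rho x))" by simp
  also have "\<dots> = opcomp (tr (psi n r y)) (tr (psi n r x))" using Mul by simp
  also have "\<dots> = tr (opcomp (psi n r x) (psi n r y))"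
    by (rule tr_opcomp[symmetric]) (use rx ry psi_rowfin in auto)
  finally show ?case by simp
qed

theorem lemma3p8:
  fixes n r :: nat and lam mu :: "nat list" and x :: uexp
  assumes "n \<ge> 3" and "r \<ge> 1"
    and "lam \<in> Lambda n r" and "mu \<in> Lambda n r"
    and "opcomp (proj n r lam) (opcomp (psi n r x) (proj n r mu)) = psi n r x"
    and "psi n r x \<noteq> zero_op"
  shows "opcomp (psi n r x) (psi n r (rho x)) \<noteq> zero_op
       \<and> opcomp (psi n r (rho x)) (psi n r x) \<noteq> zero_op"
proof -
  define A where "A = psi n r x"
  have n: "n \<ge> 2" using assms(1) by simp
  have B: "psi n r (rho x) = tr A" unfolding A_def by (rule rho_tr[OF n])
  have rA: "\<And>t. finite {u. A t u \<noteq> 0}" using psi_rowfin[of n r x] unfolding A_def rowfin_def by blast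
  have cA: "\<And>u. finite {t. A t u \<noteq> 0}"
    using psi_rowfin[of n r "rho x"] unfolding B rowfin_def tr_def by blast
  obtain t u where tu: "A t u \<noteq> 0"
  proof -
    have "\<exists>t u. A t u \<noteq> 0"
    proof (rule ccontr)
      assume "\<not> (\<exists>t u. A t u \<noteq> 0)"
      then have "A = zero_op" by (auto simp: zero_op_def fun_eq_iff)
      then show False using assms(6) unfolding A_def by simp
    qed
    then show ?thesis using that by blast
  qed
  have 1: "opcomp A (tr A) u u \<noteq> 0"
  proof -
    have "opcomp A (tr A) u u = (\<Sum>s\<in>{s. A s u \<noteq> 0}. A s u * A s u)"
      unfolding opcomp_def tr_def by simp
    also have "\<dots> > 0"
      by (rule sum_pos) (use cA tu sq_pos in auto)
    finally show ?thesis by simp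
  qed
  have 2: "opcomp (tr A) A t t \<noteq> 0"
  proof -
    have "opcomp (tr A) A t t = (\<Sum>s\<in>{s. A t s \<noteq> 0}. A t s * A t s)"
      unfolding opcomp_def tr_def by simp
    also have "\<dots> > 0"
      by (rule sum_pos) (use rA tu sq_pos in auto)
    finally show ?thesis by simp
  qed
  show ?thesis
  proof
    show "opcomp (psi n r x) (psi n r (rho x)) \<noteq> zero_op"
      unfolding B A_def[symmetric] using 1 by (auto simp: zero_op_def)
    show "opcomp (psi n r (rho x)) (psi n r x) \<noteq> zero_op"
      unfolding B A_def[symmetric] using 2 by (auto simp: zero_op_def)
  qed
qed

end
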